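(* Let $\mathcal{L}_2\subset\mathbb{P}^2_{\mathbb{R}}$ be the arrangement of $12$ lines defined by \begin{multline*} Q_2=xy(x-y)(x+y-z)(x-z)(y-z)\big(x+(1-\sqrt2)z\big)\big(y+(\sqrt2-2)z\big)\big(x+\sqrt2y+(1-\sqrt2)z\big)\\ \Big(x-\sqrt2z+\tfrac{\sqrt2}{2}y\Big)\big(x+(\sqrt2+1)y-\sqrt2z\big)\big(x+(\sqrt2-1)y+(2-2\sqrt2)z\big). \end{multline*} Then the real realization space of the matroid of $\mathcal{L}_2$ is zero-dimensional.
   Context: The matroid of a line arrangement $\{H_1,\dots,H_n\}\subset\mathbb{P}^2_{\mathbb{F}}$ is the rank-$3$ matroid on $[n]$ whose bases are the $3$-subsets $\{i,j,k\}$ with $H_i\cap H_j\cap H_k=\emptyset$ (equivalently, it encodes the intersection lattice). For a matroid $M$ realizable over $\mathbb{F}$, its realization space $\mathcal{R}(M;\mathbb{F})$ is the set of all arrangements of $n$ distinct lines in $\mathbb{P}^2_{\mathbb{F}}$ (with lines labeled by $[n]$) realizing $M$, modulo the action of $\mathrm{PGL}(3;\mathbb{F})$; its dimension is meant here. *)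

theory Defs
  imports "HOL-Analysis.Analysis"
begin

text \<open>A line a x + b y + c z = 0 in the real projective plane is represented by its
  nonzero coefficient vector (a,b,c) in real^3, determined up to a nonzero scalar.\<close>

definition line_arrangement :: "nat \<Rightarrow> (nat \<Rightarrow> real^3) \<Rightarrow> bool" where
  "line_arrangement n v \<longleftrightarrow>
     (\<forall>i<n. v i \<noteq> 0) \<and>
     (\<forall>i<n. \<forall>j<n. i \<noteq> j \<longrightarrow> \<not> (\<exists>c::real. v j = c *\<^sub>R v i))"

definition lines_meet_empty :: "real^3 \<Rightarrow> real^3 \<Rightarrow> real^3 \<Rightarrow> bool" where
  "lines_meet_empty a b c \<longleftrightarrow>
     \<not> (\<exists>p::real^3. p \<noteq> 0 \<and> p \<bullet> a = 0 \<and> p \<bullet> b = 0 \<and> p \<bullet> c = 0)"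

text \<open>The matroid of the arrangement, given by its set of bases (3-subsets of [n]).\<close>
definition arr_matroid :: "nat \<Rightarrow> (nat \<Rightarrow> real^3) \<Rightarrow> nat set set" where
  "arr_matroid n v = {{i, j, k} | i j k. i < n \<and> j < n \<and> k < n \<and>
       i \<noteq> j \<and> i \<noteq> k \<and> j \<noteq> k \<and> lines_meet_empty (v i) (v j) (v k)}"

definition realizations :: "nat set set \<Rightarrow> nat \<Rightarrow> (nat \<Rightarrow> real^3) set" where
  "realizations M n = {v. line_arrangement n v \<and> arr_matroid n v = M}"

text \<open>Two labelled arrangements are identified by PGL(3,R): an invertible linear
  map (acting on coefficient vectors) together with rescaling of each coefficient vector.\<close>
definition proj_equiv :: "nat \<Rightarrow> (nat \<Rightarrow> real^3) \<Rightarrow> (nat \<Rightarrow> real^3) \<Rightarrow> bool" where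
  "proj_equiv n v w \<longleftrightarrow>
     (\<exists>A::real^3^3. invertible A \<and>
        (\<forall>i<n. \<exists>c::real. c \<noteq> 0 \<and> w i = c *\<^sub>R (A *v v i)))"

definition realization_space :: "nat set set \<Rightarrow> nat \<Rightarrow> (nat \<Rightarrow> real^3) set set" where
  "realization_space M n =
     (\<lambda>v. {w \<in> realizations M n. proj_equiv n v w}) ` realizations M n"

text \<open>The arrangement L_2 (coefficients of the 12 linear forms, in the order of Q_2).\<close>
definition L2 :: "nat \<Rightarrow> real^3" where
  "L2 i = [vector [1, 0, 0],
           vector [0, 1, 0],
           vector [1, -1, 0],
           vector [1, 1, -1],
           vector [1, 0, -1],
           vector [0, 1, -1],
           vector [1, 0, 1 - sqrt 2],
           vector [0, 1, sqrt 2 - 2],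
           vector [1, sqrt 2, 1 - sqrt 2],
           vector [1, sqrt 2 / 2, - sqrt 2],
           vector [1, sqrt 2 + 1, - sqrt 2],
           vector [1, sqrt 2 - 1, 2 - 2 * sqrt 2]] ! i"

end

theory Submission
  imports Defs
begin

definition det3 :: "real^3 \<Rightarrow> real^3 \<Rightarrow> real^3 \<Rightarrow> real" where
  "det3 p q r = p$1*(q$2*r$3 - q$3*r$2) - p$2*(q$1*r$3 - q$3*r$1) + p$3*(q$1*r$2 - q$2*r$1)"

definition canon :: "real \<Rightarrow> nat \<Rightarrow> real^3" where
  "canon d = (let a = -1/(d+2); b = -(d+1)/(d+2); c = (1+a)/d; h = b/d; g = (h+1)/b in
     (\<lambda>i. [vector [1,0,0], vector [0,1,0], vector [1,-1,0], vector [1,1,-1],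
           vector [1,0,-1], vector [0,1,-1], vector [1,0,a], vector [0,1,b],
           vector [1,c,a], vector [1,g,h], vector [d,1,b], vector [1,d,b*(1+d)]] ! i))"

lemma vec3_eq: "(x::real^3) = y \<longleftrightarrow> x$1 = y$1 \<and> x$2 = y$2 \<and> x$3 = y$3"
  by (simp add: vec_eq_iff forall_3)

lemma core:
  fixes u :: "nat \<Rightarrow> real^3"
  assumes u0: "u 0 = vector[1,0,0]" and u1: "u 1 = vector[0,1,0]"
    and u4: "u 4 = vector[1,0,-1]" and u5: "u 5 = vector[0,1,-1]"
    and nz2: "u 2 \<noteq> 0" and nz3: "u 3 \<noteq> 0"
    and D012: "det3 (u 0) (u 1) (u 2) = 0" and D245: "det3 (u 2) (u 4) (u 5) = 0"
    and D035: "det3 (u 0) (u 3) (u 5) = 0" and D134: "det3 (u 1) (u 3) (u 4) = 0"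
    and D046: "det3 (u 0) (u 4) (u 6) = 0" and D157: "det3 (u 1) (u 5) (u 7) = 0"
    and D367: "det3 (u 3) (u 6) (u 7) = 0" and D0710: "det3 (u 0) (u 7) (u 10) = 0"
    and D2610: "det3 (u 2) (u 6) (u 10) = 0" and D168: "det3 (u 1) (u 6) (u 8) = 0"
    and D5810: "det3 (u 5) (u 8) (u 10) = 0" and D5611: "det3 (u 5) (u 6) (u 11) = 0"
    and D2711: "det3 (u 2) (u 7) (u 11) = 0" and D479: "det3 (u 4) (u 7) (u 9) = 0"
    and D1910: "det3 (u 1) (u 9) (u 10) = 0" and D4811: "det3 (u 4) (u 8) (u 11) = 0"
    and I156: "det3 (u 1) (u 5) (u 6) \<noteq> 0" and I047: "det3 (u 0) (u 4) (u 7) \<noteq> 0"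
    and I0110: "det3 (u 0) (u 1) (u 10) \<noteq> 0" and I158: "det3 (u 1) (u 5) (u 8) \<noteq> 0"
    and I1511: "det3 (u 1) (u 5) (u 11) \<noteq> 0" and I159: "det3 (u 1) (u 5) (u 9) \<noteq> 0"
    and I017: "det3 (u 0) (u 1) (u 7) \<noteq> 0" and I016: "det3 (u 0) (u 1) (u 6) \<noteq> 0"
  shows "\<exists>d. d^2 + 2*d - 1 = 0 \<and> (\<forall>i<12. \<exists>k. u i = k *\<^sub>R canon d i)"
proof -
  define X where "X i = u i $ 1" for i
  define Y where "Y i = u i $ 2" for i
  define Z where "Z i = u i $ 3" for i
  have uc: "u i = vector [X i, Y i, Z i]" for i by (simp add: vec3_eq X_def Y_def Z_def)
  note DD = D012 D245 D035 D134 D046 D157 D367 D0710 D2610 D168 D5810 D5611 D2711 D479 D1910 D4811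
  note II = I156 I047 I0110 I158 I1511 I159 I017 I016
  note DD' = DD[unfolded det3_def u0 u1 u4 u5 uc[of 2] uc[of 3] uc[of 6] uc[of 7] uc[of 8] uc[of 9] uc[of 10] uc[of 11] vector_3]
  note II' = II[unfolded det3_def u0 u1 u4 u5 uc[of 2] uc[of 3] uc[of 6] uc[of 7] uc[of 8] uc[of 9] uc[of 10] uc[of 11] vector_3]
  note DD'' = DD'[simplified]
  note II'' = II'[simplified]
  have Z2: "Z 2 = 0" and Y2: "Y 2 = - X 2" and Y3: "Y 3 = X 3" and Z3: "Z 3 = - X 3"
    and Y6: "Y 6 = 0" and X7: "X 7 = 0" using DD'' by linarith+
  have X3: "X 3 \<noteq> 0" using nz3 uc[of 3] Y3 Z3 by (auto simp: vec3_eq)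
  have X2: "X 2 \<noteq> 0" using nz2 uc[of 2] Y2 Z2 by (auto simp: vec3_eq)
  note nzs = II''
  have X6: "X 6 \<noteq> 0" and Y7: "Y 7 \<noteq> 0" and Z10: "Z 10 \<noteq> 0" and X8: "X 8 \<noteq> 0"
    and X11: "X 11 \<noteq> 0" and X9: "X 9 \<noteq> 0" and Z7: "Z 7 \<noteq> 0" and Z6: "Z 6 \<noteq> 0"
    using nzs by auto
  define a where "a = Z 6 / X 6"
  define b where "b = Z 7 / Y 7"
  have Z6a: "Z 6 = a * X 6" using X6 by (simp add: a_def)
  have Z7b: "Z 7 = b * Y 7" using Y7 by (simp add: b_def)
  have a0: "a \<noteq> 0" using Z6 Z6a by auto
  have b0: "b \<noteq> 0" using Z7 Z7b by auto
  have e367: "X 3 * (- (Z 6 * Y 7) - X 6 * Z 7 - X 6 * Y 7) = 0"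
    using DD''(7) Y6 X7 Y3 Z3 by (simp add: algebra_simps)
  have "Z 6 * Y 7 + X 6 * Z 7 + X 6 * Y 7 = 0"
  proof -
    have "X 3 * (Z 6 * Y 7 + X 6 * Z 7 + X 6 * Y 7) = 0" using e367 by (simp add: algebra_simps)
    thus ?thesis using X3 by simp
  qed
  hence "X 6 * Y 7 * (a + b + 1) = 0" unfolding Z6a Z7b by (simp add: algebra_simps)
  hence ab: "b = -1 - a" using X6 Y7 by simp
  have Z10b: "Z 10 = b * Y 10" using DD''(8) Z7b Y7 by (simp add: algebra_simps)
  have Y10: "Y 10 \<noteq> 0" using Z10 Z10b by auto
  define d where "d = X 10 / Y 10"
  have X10d: "X 10 = d * Y 10" using Y10 by (simp add: d_def)
  have "X 2 * (- (Z 6 * Y 10) + X 6 * Z 10 - Z 6 * X 10) = 0"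
    using DD''(9) Y6 Y2 Z2 by (simp add: algebra_simps)
  hence "- (Z 6 * Y 10) + X 6 * Z 10 - Z 6 * X 10 = 0" using X2 by simp
  hence "X 6 * Y 10 * (- a + b - a * d) = 0" unfolding Z6a Z10b X10d by (simp add: algebra_simps)
  hence ad: "a * d = b - a" using X6 Y10 by simp
  have Z8a: "Z 8 = a * X 8" using DD''(10) Z6a X6 by (simp add: algebra_simps)
  define c where "c = Y 8 / X 8"
  have Y8c: "Y 8 = c * X 8" using X8 by (simp add: c_def)
  have "X 8 * Y 10 * (a * d - b + c * d - 1) = 0"
    using DD''(11) unfolding Z8a Y8c X10d Z10b by (simp add: algebra_simps)
  hence cd: "a * d - b + c * d - 1 = 0" using X8 Y10 by simp
  define e where "e = Y 11 / X 11"
  define z where "z = Z 11 / X 11"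
  have Y11e: "Y 11 = e * X 11" using X11 by (simp add: e_def)
  have Z11z: "Z 11 = z * X 11" using X11 by (simp add: z_def)
  have "X 6 * X 11 * (a - z - e) = 0"
    using DD''(12) Y6 unfolding Z6a Y11e Z11z by (simp add: algebra_simps)
  hence e5611: "a - z - e = 0" using X6 X11 by simp
  have "X 2 * (Y 7 * Z 11 - Z 7 * Y 11 - Z 7 * X 11) = 0"
    using DD''(13) X7 Y2 Z2 by (simp add: algebra_simps)
  hence "Y 7 * Z 11 - Z 7 * Y 11 - Z 7 * X 11 = 0" using X2 by simp
  hence "Y 7 * X 11 * (z - b * e - b) = 0" unfolding Z7b Y11e Z11z by (simp add: algebra_simps)
  hence "z - b * e - b = 0" using Y7 X11 by simp
  hence zb: "z = b * (e + 1)" by (simp add: algebra_simps)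
  define g where "g = Y 9 / X 9"
  define h where "h = Z 9 / X 9"
  have Y9g: "Y 9 = g * X 9" using X9 by (simp add: g_def)
  have Z9h: "Z 9 = h * X 9" using X9 by (simp add: h_def)
  have "Y 7 * X 9 * (h - b * g + 1) = 0"
    using DD''(14) X7 unfolding Z7b Y9g Z9h by (simp add: algebra_simps)
  hence hg: "h - b * g + 1 = 0" using Y7 X9 by simp
  have "X 9 * Y 10 * (h * d - b) = 0"
    using DD''(15) unfolding Z9h X10d Z10b by (simp add: algebra_simps)
  hence hd: "h * d = b" using X9 Y10 by simp
  have "X 8 * X 11 * (c * z - a * e + c - e) = 0"
    using DD''(16) unfolding Y8c Z8a Y11e Z11z by (simp add: algebra_simps)
  hence e4811: "c * z - a * e + c - e = 0" using X8 X11 by simp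
  have ad2: "a * (d + 2) = -1" using ad ab by (simp add: algebra_simps)
  have d2: "d + 2 \<noteq> 0" using ad2 by auto
  have ed: "e = d"
  proof -
    have h1: "1 + (a * e + a * 2) = 0" using e5611 zb ab by (simp add: algebra_simps)
    have h2: "a * d = -1 - 2 * a" using ad ab by linarith
    have "a * e = a * d" using h1 h2 by linarith
    thus ?thesis using a0 by simp
  qed
  have cd2: "c * d = 1 + a" using cd ad by simp
  have d0: "d \<noteq> 0" using cd2 ad ab a0 by auto
  have aval: "a = -1/(d+2)" using ad2 d2 by (simp add: field_simps)
  have bval: "b = -(d+1)/(d+2)" using ab aval d2 by (simp add: field_simps)
  have cval: "c = (1+a)/d" using cd2 d0 by (simp add: field_simps)
  have hval: "h = b/d" using hd d0 by (simp add: field_simps)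
  have gval: "g = (h+1)/b" using hg b0 by (simp add: field_simps)
  have k1: "c * (b * (d + 1) + 1) = d * (a + 1)" using e4811 zb ed by (simp add: algebra_simps)
  have "(1 + a) * (b * (d + 1) + 1 - d^2) = 0"
  proof -
    have "c * d * (b * (d + 1) + 1) = d * d * (a + 1)" using k1 by (metis mult.assoc mult.commute)
    thus ?thesis unfolding cd2 by (simp add: algebra_simps power2_eq_square)
  qed
  moreover have "1 + a \<noteq> 0" using ab b0 by simp
  ultimately have k2: "b * (d + 1) + 1 - d^2 = 0" by simp
  have "(d + 1) * (d^2 + 2*d - 1) = 0"
  proof -
    have "(-(d+1)/(d+2)) * (d + 1) + 1 - d^2 = 0" using k2 bval by simp
    hence "-(d+1) * (d + 1) + (1 - d^2) * (d+2) = 0" using d2 by (simp add: field_simps)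
    thus ?thesis by (simp add: algebra_simps power2_eq_square power3_eq_cube)
  qed
  moreover have "d + 1 \<noteq> 0" using bval b0 by auto
  ultimately have dq: "d^2 + 2*d - 1 = 0" by simp
  have "\<forall>i<12. \<exists>k. u i = k *\<^sub>R canon d i"
  proof (intro allI impI)
    fix i :: nat assume "i < 12"
    hence "i \<in> {0,1,2,3,4,5,6,7,8,9,10,11}" by (simp add: less_Suc_eq numeral_eq_Suc)
    thus "\<exists>k. u i = k *\<^sub>R canon d i"
    proof (elim insertE)
      assume "i = 0" thus ?thesis by (intro exI[of _ 1]) (simp add: canon_def Let_def u0)
    next
      assume "i = 1" thus ?thesis by (intro exI[of _ 1]) (simp add: canon_def Let_def u1[simplified])
    next
      assume "i = 2" thus ?thesis by (intro exI[of _ "X 2"]) (simp add: canon_def Let_def vec3_eq uc Y2 Z2)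
    next
      assume "i = 3" thus ?thesis by (intro exI[of _ "X 3"]) (simp add: canon_def Let_def vec3_eq uc Y3 Z3)
    next
      assume "i = 4" thus ?thesis by (intro exI[of _ 1]) (simp add: canon_def Let_def u4)
    next
      assume "i = 5" thus ?thesis by (intro exI[of _ 1]) (simp add: canon_def Let_def u5)
    next
      assume "i = 6" thus ?thesis
        by (intro exI[of _ "X 6"]) (simp add: canon_def vec3_eq uc Y6 Z6a aval Let_def)
    next
      assume "i = 7" thus ?thesis
        by (intro exI[of _ "Y 7"]) (simp add: canon_def vec3_eq uc X7 Z7b bval Let_def)
    next
      assume "i = 8" thus ?thesis
        by (intro exI[of _ "X 8"]) (simp add: canon_def vec3_eq uc Y8c Z8a cval aval Let_def)
    next
      assume "i = 9" thus ?thesis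
        by (intro exI[of _ "X 9"]) (simp add: canon_def vec3_eq uc Y9g Z9h gval hval bval Let_def)
    next
      assume "i = 10" thus ?thesis
        by (intro exI[of _ "Y 10"]) (simp add: canon_def vec3_eq uc X10d Z10b bval Let_def)
    next
      assume "i = 11" thus ?thesis
        by (intro exI[of _ "X 11"]) (simp add: canon_def vec3_eq uc Y11e Z11z zb ed bval Let_def)
    qed simp
  qed
  with dq show ?thesis by blast
qed

lemma lme_det3: "lines_meet_empty p q r \<longleftrightarrow> det3 p q r \<noteq> 0"
proof -
  define M :: "real^3^3" where "M = vector [p, q, r]"
  have Mv: "M *v x = vector [p \<bullet> x, q \<bullet> x, r \<bullet> x]" for x
    unfolding M_def by (simp add: vec_eq_iff forall_3 matrix_vector_mult_def inner_vec_def sum_3)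
  have "lines_meet_empty p q r \<longleftrightarrow> (\<forall>x. M *v x = 0 \<longrightarrow> x = 0)"
    unfolding lines_meet_empty_def Mv by (auto simp: vec_eq_iff forall_3 inner_commute)
  also have "\<dots> \<longleftrightarrow> invertible M"
    by (simp add: invertible_left_inverse matrix_left_invertible_ker)
  also have "\<dots> \<longleftrightarrow> det M \<noteq> 0" by (rule invertible_det_nz)
  also have "det M = det3 p q r"
    unfolding M_def det_3 det3_def by (simp add: algebra_simps)
  finally show ?thesis .
qed

lemma det3_swap12: "det3 a b c = - det3 b a c" by (simp add: det3_def algebra_simps)
lemma det3_swap23: "det3 a b c = - det3 a c b" by (simp add: det3_def algebra_simps)

lemma lme_sym12: "lines_meet_empty a b c = lines_meet_empty b a c"
  by (simp add: lme_det3 det3_swap12[of a b c])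
lemma lme_sym23: "lines_meet_empty a b c = lines_meet_empty a c b"
  by (simp add: lme_det3 det3_swap23[of a b c])

lemma mem_matroid:
  assumes "i < n" "j < n" "k < n" "i \<noteq> j" "i \<noteq> k" "j \<noteq> k"
  shows "{i,j,k} \<in> arr_matroid n v \<longleftrightarrow> lines_meet_empty (v i) (v j) (v k)"
proof
  assume "lines_meet_empty (v i) (v j) (v k)"
  thus "{i,j,k} \<in> arr_matroid n v" using assms unfolding arr_matroid_def by blast
next
  assume "{i,j,k} \<in> arr_matroid n v"
  then obtain i' j' k' where eq: "{i,j,k} = {i',j',k'}" and
    L: "lines_meet_empty (v i') (v j') (v k')"
    unfolding arr_matroid_def by blast
  have "i \<in> {i',j',k'}" "j \<in> {i',j',k'}" "k \<in> {i',j',k'}" using eq by auto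
  thus "lines_meet_empty (v i) (v j) (v k)"
    using assms(4-6) L by (auto, (metis lme_sym12 lme_sym23)+)
qed

lemma det3_det: "det3 p q r = det (vector [p, q, r] :: real^3^3)"
  unfolding det_3 det3_def by (simp add: algebra_simps)
lemma det3_mat: "det3 (A *v a) (A *v b) (A *v c) = det A * det3 a b c"
proof -
  have "(vector [A *v a, A *v b, A *v c] :: real^3^3) = vector [a, b, c] ** transpose A"
    by (simp add: vec_eq_iff forall_3 matrix_matrix_mult_def matrix_vector_mult_def transpose_def sum_3 mult.commute)
  thus ?thesis by (simp add: det3_det det_mul)
qed

lemma det3_scale: "det3 (x *\<^sub>R a) (y *\<^sub>R b) (z *\<^sub>R c) = x * y * z * det3 a b c"
  by (simp add: det3_def algebra_simps)

lemma pe_real: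
  assumes pe: "proj_equiv n v w" and vr: "v \<in> realizations M n"
  shows "w \<in> realizations M n"
proof -
  obtain A :: "real^3^3" where inv: "invertible A" and
    ex: "\<forall>i<n. \<exists>c. c \<noteq> 0 \<and> w i = c *\<^sub>R (A *v v i)"
    using pe unfolding proj_equiv_def by blast
  then obtain cf where cf: "\<And>i. i < n \<Longrightarrow> cf i \<noteq> 0 \<and> w i = cf i *\<^sub>R (A *v v i)" by metis
  obtain B where BA: "B ** A = mat 1" using inv invertible_def by blast
  have Ainj: "A *v x = 0 \<Longrightarrow> x = 0" for x
    by (metis BA matrix_vector_mul_assoc matrix_vector_mul_lid matrix_vector_mult_0_right)
  have detA: "det A \<noteq> 0" using inv invertible_det_nz by blast
  have la: "line_arrangement n v" and mv: "arr_matroid n v = M" using vr unfolding realizations_def by auto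
  have lme_eq: "lines_meet_empty (w i) (w j) (w k) = lines_meet_empty (v i) (v j) (v k)"
    if "i < n" "j < n" "k < n" for i j k
    using cf[OF that(1)] cf[OF that(2)] cf[OF that(3)] detA
    by (simp add: lme_det3 det3_scale det3_mat)
  have "arr_matroid n w = arr_matroid n v"
    unfolding arr_matroid_def
  proof (intro Collect_cong iffI)
    fix x assume "\<exists>i j k. x = {i, j, k} \<and> i < n \<and> j < n \<and> k < n \<and> i \<noteq> j \<and> i \<noteq> k \<and> j \<noteq> k \<and> lines_meet_empty (w i) (w j) (w k)"
    then obtain i j k where "x = {i, j, k} \<and> i < n \<and> j < n \<and> k < n \<and> i \<noteq> j \<and> i \<noteq> k \<and> j \<noteq> k \<and> lines_meet_empty (w i) (w j) (w k)" by blast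
    thus "\<exists>i j k. x = {i, j, k} \<and> i < n \<and> j < n \<and> k < n \<and> i \<noteq> j \<and> i \<noteq> k \<and> j \<noteq> k \<and> lines_meet_empty (v i) (v j) (v k)"
      using lme_eq[of i j k] by blast
  next
    fix x assume "\<exists>i j k. x = {i, j, k} \<and> i < n \<and> j < n \<and> k < n \<and> i \<noteq> j \<and> i \<noteq> k \<and> j \<noteq> k \<and> lines_meet_empty (v i) (v j) (v k)"
    then obtain i j k where "x = {i, j, k} \<and> i < n \<and> j < n \<and> k < n \<and> i \<noteq> j \<and> i \<noteq> k \<and> j \<noteq> k \<and> lines_meet_empty (v i) (v j) (v k)" by blast
    thus "\<exists>i j k. x = {i, j, k} \<and> i < n \<and> j < n \<and> k < n \<and> i \<noteq> j \<and> i \<noteq> k \<and> j \<noteq> k \<and> lines_meet_empty (w i) (w j) (w k)"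
      using lme_eq[of i j k] by blast
  qed
  moreover have "line_arrangement n w"
    unfolding line_arrangement_def
  proof (intro conjI allI impI notI)
    fix i assume i: "i < n" and "w i = 0"
    hence "A *v v i = 0" using cf[OF i] by simp
    hence "v i = 0" by (rule Ainj)
    thus False using la i unfolding line_arrangement_def by blast
  next
    fix i j assume i: "i < n" and j: "j < n" and ij: "i \<noteq> j" and "\<exists>c. w j = c *\<^sub>R w i"
    then obtain c where c: "w j = c *\<^sub>R w i" by blast
    have "A *v (cf j *\<^sub>R v j - (c * cf i) *\<^sub>R v i) = 0"
      using c cf[OF i] cf[OF j] by (simp add: algebra_simps)
    hence "cf j *\<^sub>R v j - (c * cf i) *\<^sub>R v i = 0" by (rule Ainj)
    hence e1: "cf j *\<^sub>R v j = (c * cf i) *\<^sub>R v i" by simp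
    have "v j = (1 / cf j) *\<^sub>R (cf j *\<^sub>R v j)" using cf[OF j] by simp
    also have "\<dots> = (c * cf i / cf j) *\<^sub>R v i" unfolding e1 by simp
    finally have "v j = (c * cf i / cf j) *\<^sub>R v i" .
    thus False using la i j ij unfolding line_arrangement_def by blast
  qed
  ultimately show ?thesis using mv unfolding realizations_def by simp
qed

lemma pe_sym:
  assumes "proj_equiv n v w" shows "proj_equiv n w v"
proof -
  obtain A :: "real^3^3" where inv: "invertible A" and
    ex: "\<forall>i<n. \<exists>c. c \<noteq> 0 \<and> w i = c *\<^sub>R (A *v v i)"
    using assms unfolding proj_equiv_def by blast
  obtain B where BA: "B ** A = mat 1" and AB: "A ** B = mat 1" using inv invertible_def by blast
  have invB: "invertible B" using BA AB invertible_def by blast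
  have "\<forall>i<n. \<exists>c. c \<noteq> 0 \<and> v i = c *\<^sub>R (B *v w i)"
  proof (intro allI impI)
    fix i assume "i < n"
    then obtain c where c: "c \<noteq> 0" "w i = c *\<^sub>R (A *v v i)" using ex by blast
    have "B *v w i = c *\<^sub>R v i"
      using c(2) BA by (simp add: algebra_simps matrix_vector_mul_assoc)
    hence "v i = (1/c) *\<^sub>R (B *v w i)" using c(1) by simp
    thus "\<exists>c. c \<noteq> 0 \<and> v i = c *\<^sub>R (B *v w i)" using c(1) by (intro exI[of _ "1/c"]) simp
  qed
  thus ?thesis using invB unfolding proj_equiv_def by blast
qed

lemma pe_trans:
  assumes "proj_equiv n u v" "proj_equiv n v w" shows "proj_equiv n u w"
proof -
  obtain A :: "real^3^3" where invA: "invertible A" and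
    exA: "\<forall>i<n. \<exists>c. c \<noteq> 0 \<and> v i = c *\<^sub>R (A *v u i)"
    using assms(1) unfolding proj_equiv_def by blast
  obtain B :: "real^3^3" where invB: "invertible B" and
    exB: "\<forall>i<n. \<exists>c. c \<noteq> 0 \<and> w i = c *\<^sub>R (B *v v i)"
    using assms(2) unfolding proj_equiv_def by blast
  have "\<forall>i<n. \<exists>c. c \<noteq> 0 \<and> w i = c *\<^sub>R ((B ** A) *v u i)"
  proof (intro allI impI)
    fix i assume i: "i < n"
    obtain c where c: "c \<noteq> 0" "v i = c *\<^sub>R (A *v u i)" using exA i by blast
    obtain d where d: "d \<noteq> 0" "w i = d *\<^sub>R (B *v v i)" using exB i by blast
    have "w i = (d * c) *\<^sub>R ((B ** A) *v u i)"
      using c d by (simp add: algebra_simps matrix_vector_mul_assoc)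
    thus "\<exists>c. c \<noteq> 0 \<and> w i = c *\<^sub>R ((B ** A) *v u i)" using c d by (intro exI[of _ "d*c"]) simp
  qed
  thus ?thesis using invertible_mult[OF invB invA] unfolding proj_equiv_def by blast
qed

lemma sqrt2_lo: "1.41 < sqrt (2::real)"
  by (rule real_less_rsqrt) (simp add: power2_eq_square)
lemma sqrt2_hi: "sqrt (2::real) < 1.42"
proof -
  have "sqrt (2::real) < sqrt (1.42^2)" by (rule real_sqrt_less_mono) (simp add: power2_eq_square)
  thus ?thesis by simp
qed
lemma sqrt2_sq: "sqrt (2::real) * sqrt 2 = 2" by simp

lemma L2_distinct: "\<forall>i<12. \<forall>j<12. i \<noteq> j \<longrightarrow> \<not> (\<exists>c::real. L2 j = c *\<^sub>R L2 i)"
  using sqrt2_lo sqrt2_hi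
  by (simp add: less_Suc_eq numeral_eq_Suc L2_def vec3_eq; auto simp: algebra_simps)

lemma L2_nz: "\<forall>i<12. L2 i \<noteq> 0"
  by (simp add: less_Suc_eq numeral_eq_Suc L2_def vec3_eq)

lemma L2_dep:
  "det3 (L2 0) (L2 1) (L2 2) = 0"
  "det3 (L2 2) (L2 4) (L2 5) = 0"
  "det3 (L2 0) (L2 3) (L2 5) = 0"
  "det3 (L2 1) (L2 3) (L2 4) = 0"
  "det3 (L2 0) (L2 4) (L2 6) = 0"
  "det3 (L2 1) (L2 5) (L2 7) = 0"
  "det3 (L2 3) (L2 6) (L2 7) = 0"
  "det3 (L2 0) (L2 7) (L2 10) = 0"
  "det3 (L2 2) (L2 6) (L2 10) = 0"
  "det3 (L2 1) (L2 6) (L2 8) = 0"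
  "det3 (L2 5) (L2 8) (L2 10) = 0"
  "det3 (L2 5) (L2 6) (L2 11) = 0"
  "det3 (L2 2) (L2 7) (L2 11) = 0"
  "det3 (L2 4) (L2 7) (L2 9) = 0"
  "det3 (L2 1) (L2 9) (L2 10) = 0"
  "det3 (L2 4) (L2 8) (L2 11) = 0"
  by (simp_all add: L2_def det3_def field_simps)

lemma L2_ind:
  "det3 (L2 1) (L2 5) (L2 6) \<noteq> 0"
  "det3 (L2 0) (L2 4) (L2 7) \<noteq> 0"
  "det3 (L2 0) (L2 1) (L2 10) \<noteq> 0"
  "det3 (L2 1) (L2 5) (L2 8) \<noteq> 0"
  "det3 (L2 1) (L2 5) (L2 11) \<noteq> 0"
  "det3 (L2 1) (L2 5) (L2 9) \<noteq> 0"
  "det3 (L2 0) (L2 1) (L2 7) \<noteq> 0"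
  "det3 (L2 0) (L2 1) (L2 6) \<noteq> 0"
  "det3 (L2 0) (L2 1) (L2 4) \<noteq> 0"
  "det3 (L2 0) (L2 1) (L2 5) \<noteq> 0"
  "det3 (L2 0) (L2 4) (L2 5) \<noteq> 0"
  "det3 (L2 1) (L2 4) (L2 5) \<noteq> 0"
  "det3 (L2 5) (L2 1) (L2 4) \<noteq> 0"
  "det3 (L2 0) (L2 5) (L2 4) \<noteq> 0"
  using sqrt2_lo sqrt2_hi by (simp_all add: L2_def det3_def algebra_simps)

lemma frame:
  fixes w0 w1 w4 w5 :: "real^3"
  assumes D: "det3 w0 w1 w4 \<noteq> 0" and a: "det3 w5 w1 w4 \<noteq> 0"
    and b: "det3 w0 w5 w4 \<noteq> 0" and g: "det3 w0 w1 w5 \<noteq> 0"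
  shows "\<exists>A k0 k1 k4. invertible (A::real^3^3) \<and> k0 \<noteq> 0 \<and> k1 \<noteq> 0 \<and> k4 \<noteq> 0 \<and>
     A *v w0 = k0 *\<^sub>R vector[1,0,0] \<and> A *v w1 = k1 *\<^sub>R vector[0,1,0] \<and>
     A *v w4 = k4 *\<^sub>R vector[1,0,-1] \<and> A *v w5 = vector[0,1,-1]"
proof -
  define Dv where "Dv = det3 w0 w1 w4"
  define \<alpha> where "\<alpha> = det3 w5 w1 w4 / Dv"
  define \<beta> where "\<beta> = det3 w0 w5 w4 / Dv"
  define \<gamma> where "\<gamma> = det3 w0 w1 w5 / Dv"
  have a0: "\<alpha> \<noteq> 0" and b0: "\<beta> \<noteq> 0" and g0: "\<gamma> \<noteq> 0"
    using D a b g by (simp_all add: \<alpha>_def \<beta>_def \<gamma>_def Dv_def)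
  have cr0: "Dv *\<^sub>R w5 = det3 w5 w1 w4 *\<^sub>R w0 + det3 w0 w5 w4 *\<^sub>R w1 + det3 w0 w1 w5 *\<^sub>R w4"
    unfolding Dv_def by (simp add: vec3_eq det3_def algebra_simps)
  have cr: "w5 = \<alpha> *\<^sub>R w0 + \<beta> *\<^sub>R w1 + \<gamma> *\<^sub>R w4"
  proof -
    have "w5 = (1/Dv) *\<^sub>R (Dv *\<^sub>R w5)" using D by (simp add: Dv_def)
    also have "\<dots> = \<alpha> *\<^sub>R w0 + \<beta> *\<^sub>R w1 + \<gamma> *\<^sub>R w4"
      unfolding cr0 by (simp add: \<alpha>_def \<beta>_def \<gamma>_def scaleR_add_right divide_inverse mult.commute)
    finally show ?thesis .
  qed
  define c1 where "c1 = (- \<alpha>) *\<^sub>R w0"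
  define c2 where "c2 = \<beta> *\<^sub>R w1"
  define c3 where "c3 = (- \<alpha>) *\<^sub>R w0 - \<gamma> *\<^sub>R w4"
  define C :: "real^3^3" where "C = transpose (vector [c1, c2, c3])"
  have Cv: "C *v x = x$1 *\<^sub>R c1 + x$2 *\<^sub>R c2 + x$3 *\<^sub>R c3" for x
    by (simp add: C_def vec_eq_iff forall_3 matrix_vector_mult_def transpose_def sum_3 algebra_simps)
  have "det C = det3 c1 c2 c3" by (simp add: C_def det3_det)
  also have "\<dots> = \<alpha> * \<beta> * \<gamma> * Dv"
    by (simp add: c1_def c2_def c3_def Dv_def det3_def algebra_simps)
  finally have "det C \<noteq> 0" using a0 b0 g0 D by (simp add: Dv_def)
  hence "invertible C" using invertible_det_nz by blast
  then obtain B where BC: "B ** C = mat 1" and CB: "C ** B = mat 1" unfolding invertible_def by blast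
  have invB: "invertible B" using BC CB invertible_def by blast
  have BCv: "B *v (C *v x) = x" for x by (simp add: matrix_vector_mul_assoc BC)
  have "w0 = C *v vector[-1/\<alpha>, 0, 0]" using a0 by (simp add: Cv c1_def)
  hence "B *v w0 = vector[-1/\<alpha>, 0, 0]" by (metis BCv)
  hence e0: "B *v w0 = (-1/\<alpha>) *\<^sub>R vector[1,0,0]" by (simp add: vec3_eq)
  have "w1 = C *v vector[0, 1/\<beta>, 0]" using b0 by (simp add: Cv c2_def)
  hence "B *v w1 = vector[0, 1/\<beta>, 0]" by (metis BCv)
  hence e1: "B *v w1 = (1/\<beta>) *\<^sub>R vector[0,1,0]" by (simp add: vec3_eq)
  have "w4 = C *v vector[1/\<gamma>, 0, -1/\<gamma>]" using g0 by (simp add: Cv c1_def c3_def algebra_simps)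
  hence "B *v w4 = vector[1/\<gamma>, 0, -1/\<gamma>]" by (metis BCv)
  hence e4: "B *v w4 = (1/\<gamma>) *\<^sub>R vector[1,0,-1]" by (simp add: vec3_eq)
  have "w5 = C *v vector[0, 1, -1]" by (simp add: Cv c2_def c1_def c3_def cr algebra_simps)
  hence e5: "B *v w5 = vector[0,1,-1]" by (metis BCv)
  show ?thesis using invB e0 e1 e4 e5 a0 b0 g0
    by (intro exI[of _ B] exI[of _ "-1/\<alpha>"] exI[of _ "1/\<beta>"] exI[of _ "1/\<gamma>"]) simp
qed

lemma real_det:
  assumes u: "u \<in> realizations (arr_matroid 12 L2) 12"
    and "i < 12" "j < 12" "k < 12" "i \<noteq> j" "i \<noteq> k" "j \<noteq> k"
  shows "det3 (u i) (u j) (u k) = 0 \<longleftrightarrow> det3 (L2 i) (L2 j) (L2 k) = 0"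
proof -
  have "arr_matroid 12 u = arr_matroid 12 L2" using u unfolding realizations_def by simp
  hence "lines_meet_empty (u i) (u j) (u k) \<longleftrightarrow> lines_meet_empty (L2 i) (L2 j) (L2 k)"
    using mem_matroid[OF assms(2-7), of u] mem_matroid[OF assms(2-7), of L2] by simp
  thus ?thesis by (simp add: lme_det3)
qed

lemma reduce:
  assumes v: "v \<in> realizations (arr_matroid 12 L2) 12"
  shows "\<exists>d. d^2 + 2*d - 1 = 0 \<and> proj_equiv 12 v (canon d)"
proof -
  have fr: "det3 (v 0) (v 1) (v 4) \<noteq> 0" "det3 (v 5) (v 1) (v 4) \<noteq> 0"
     "det3 (v 0) (v 5) (v 4) \<noteq> 0" "det3 (v 0) (v 1) (v 5) \<noteq> 0"
    using real_det[OF v] L2_ind by simp_all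
  obtain A k0 k1 k4 where A: "invertible (A::real^3^3)" "k0 \<noteq> 0" "k1 \<noteq> 0" "k4 \<noteq> 0"
     "A *v v 0 = k0 *\<^sub>R vector[1,0,0]" "A *v v 1 = k1 *\<^sub>R vector[0,1,0]"
     "A *v v 4 = k4 *\<^sub>R vector[1,0,-1]" "A *v v 5 = vector[0,1,-1]"
    using frame[OF fr] by blast
  define sc where "sc i = (if i = 0 then 1/k0 else if i = 1 then 1/k1 else if i = 4 then 1/k4 else (1::real))" for i :: nat
  define u where "u i = sc i *\<^sub>R (A *v v i)" for i
  have sc0: "sc i \<noteq> 0" for i using A by (simp add: sc_def)
  have pe1: "proj_equiv 12 v u"
    unfolding proj_equiv_def using A(1) sc0 u_def by blast
  have ur: "u \<in> realizations (arr_matroid 12 L2) 12" by (rule pe_real[OF pe1 v])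
  have la: "line_arrangement 12 u" using ur unfolding realizations_def by simp
  have u0: "u 0 = vector[1,0,0]" using A by (simp add: u_def sc_def)
  have u1: "u 1 = vector[0,1,0]" using A by (simp add: u_def sc_def)
  have u4: "u 4 = vector[1,0,-1]" using A by (simp add: u_def sc_def)
  have u5: "u 5 = vector[0,1,-1]" using A by (simp add: u_def sc_def)
  have nz: "u i \<noteq> 0" if "i < 12" for i using la that unfolding line_arrangement_def by blast
  note RD = real_det[OF ur]
  have n23: "u 2 \<noteq> 0" "u 3 \<noteq> 0" by (simp_all add: nz)
  have "\<exists>d. d^2 + 2*d - 1 = 0 \<and> (\<forall>i<12. \<exists>k. u i = k *\<^sub>R canon d i)"
    by (rule core[OF u0 u1 u4 u5 n23]) (simp_all only: RD L2_dep L2_ind, simp_all)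
  then obtain d where d: "d^2 + 2*d - 1 = 0" and uk: "\<forall>i<12. \<exists>k. u i = k *\<^sub>R canon d i"
    by blast
  have "proj_equiv 12 u (canon d)"
    unfolding proj_equiv_def
  proof (intro exI[of _ "mat 1"] conjI allI impI)
    show "invertible (mat 1 :: real^3^3)" unfolding invertible_def by auto
  next
    fix i assume i: "i < (12::nat)"
    then obtain k where k: "u i = k *\<^sub>R canon d i" using uk by blast
    have "k \<noteq> 0" using k nz[OF i] by auto
    thus "\<exists>c. c \<noteq> 0 \<and> canon d i = c *\<^sub>R (mat 1 *v u i)"
      using k by (intro exI[of _ "1/k"]) simp
  qed
  thus ?thesis using pe_trans[OF pe1] d by blast
qed

lemma roots_finite: "finite {d::real. d^2 + 2*d - 1 = 0}"
proof (rule finite_subset)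
  show "{d::real. d^2 + 2*d - 1 = 0} \<subseteq> {sqrt 2 - 1, - sqrt 2 - 1}"
  proof
    fix d :: real assume "d \<in> {d. d^2 + 2*d - 1 = 0}"
    hence "(d + 1)^2 = (sqrt 2)^2" by (simp add: power2_eq_square algebra_simps)
    hence "d + 1 = sqrt 2 \<or> d + 1 = - sqrt 2" using power2_eq_iff by blast
    thus "d \<in> {sqrt 2 - 1, - sqrt 2 - 1}" by auto
  qed
qed simp

theorem proposition4p5:
  shows "finite (realization_space (arr_matroid 12 L2) 12) \<and>
         realization_space (arr_matroid 12 L2) 12 \<noteq> {}"
proof
  let ?R = "realizations (arr_matroid 12 L2) 12"
  let ?orb = "\<lambda>v. {w \<in> ?R. proj_equiv 12 v w}"
  have "realization_space (arr_matroid 12 L2) 12 \<subseteq> ?orb ` (canon ` {d::real. d^2 + 2*d - 1 = 0})"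
  proof
    fix X assume "X \<in> realization_space (arr_matroid 12 L2) 12"
    then obtain v where v: "v \<in> ?R" and X: "X = ?orb v"
      unfolding realization_space_def by blast
    obtain d where d: "d^2 + 2*d - 1 = 0" and pe: "proj_equiv 12 v (canon d)"
      using reduce[OF v] by blast
    have "?orb v = ?orb (canon d)"
      using pe pe_sym pe_trans by blast
    thus "X \<in> ?orb ` (canon ` {d::real. d^2 + 2*d - 1 = 0})" using X d by blast
  qed
  thus "finite (realization_space (arr_matroid 12 L2) 12)"
    by (rule finite_subset) (intro finite_imageI roots_finite)
next
  have "line_arrangement 12 L2" unfolding line_arrangement_def using L2_nz L2_distinct by blast
  hence "L2 \<in> realizations (arr_matroid 12 L2) 12" unfolding realizations_def by simp
  thus "realization_space (arr_matroid 12 L2) 12 \<noteq> {}" unfolding realization_space_def by blast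
qed

end
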